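(* Let $f(\alpha,\beta)$, $g(\alpha,\beta)$, $h(\alpha)$ be functions that are $2\pi$-periodic in each argument and satisfy $f(\alpha,\beta)=-f(\beta,\alpha)$ and $g(\alpha,\beta)=-g(\beta,\alpha)$. Consider the quad-equation on a rhombus with black vertices $x_0,x_{12}$ and white vertices $x_1,x_2$, where $x_1-x_0=e^{i\alpha}$, $x_2-x_0=e^{i\beta}$ (as points of $\mathbb C$), written in its four "centered" forms \begin{align*} (E_0)&\quad f(\alpha,\beta)x_{12}-g(\alpha,\beta)x_0=i\big(h(\beta)x_2-h(\alpha)x_1\big),\\ (E_{12})&\quad f(\alpha+\pi,\beta+\pi)x_0-g(\alpha+\pi,\beta+\pi)x_{12}=i\big(h(\beta+\pi)x_1-h(\alpha+\pi)x_2\big),\\ (E_1)&\quad f(\beta+\pi,\alpha)x_2-g(\beta+\pi,\alpha)x_1=i\big(h(\alpha)x_0-h(\beta+\pi)x_{12}\big),\\ (E_2)&\quad f(\alpha+\pi,\beta)x_1-g(\alpha+\pi,\beta)x_2=i\big(h(\beta)x_0-h(\alpha+\pi)x_{12}\big). \end{align*} The quad-equation is symmetric with respect to centering the quad at any of its four vertices (i.e., for all $\alpha,\beta$ the four linear equations $(E_0),(E_{12}),(E_1),(E_2)$ in $x_0,x_1,x_2,x_{12}$ have proportional coefficient vectors) if and only if there is a constant $c\neq0$ such that for all $\alpha,\beta$ $$h(\alpha)h(\alpha+\pi)=c,\qquad f(\alpha,\beta)f(\alpha+\pi,\beta)=-c,\qquad g(\alpha,\beta)=c^{-1}f(\alpha,\beta)h(\alpha)h(\beta).$$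 Moreover, these conditions together with the skew-symmetry of $f$ imply $f(\alpha,\beta)=f(\alpha+\pi,\beta+\pi)$.
   Context: The quad-equations live on a bipartite quad-graph rhombically embedded in $\mathbb C$ (all faces are rhombi with unit sides), with black and white vertices; edges are directed from black to white and labelled by $\alpha$ where $e^{i\alpha}$ is the edge vector. Opposite edges of a face, directed black-to-white, carry labels differing by $\pi$. *)

theory Defs
  imports Complex_Main
begin

text \<open>Coefficient vectors, in the variable order (x0, x1, x2, x12), of the four
centered forms of the quad-equation, each written as (LHS - RHS = 0).\<close>

definition coeffE0 :: "(real \<Rightarrow> real \<Rightarrow> complex) \<Rightarrow> (real \<Rightarrow> real \<Rightarrow> complex) \<Rightarrow> (real \<Rightarrow> complex)
    \<Rightarrow> real \<Rightarrow> real \<Rightarrow> complex list" where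
  "coeffE0 f g h a b = [- g a b, \<i> * h a, - \<i> * h b, f a b]"

definition coeffE12 :: "(real \<Rightarrow> real \<Rightarrow> complex) \<Rightarrow> (real \<Rightarrow> real \<Rightarrow> complex) \<Rightarrow> (real \<Rightarrow> complex)
    \<Rightarrow> real \<Rightarrow> real \<Rightarrow> complex list" where
  "coeffE12 f g h a b = [f (a + pi) (b + pi), - \<i> * h (b + pi), \<i> * h (a + pi), - g (a + pi) (b + pi)]"

definition coeffE1 :: "(real \<Rightarrow> real \<Rightarrow> complex) \<Rightarrow> (real \<Rightarrow> real \<Rightarrow> complex) \<Rightarrow> (real \<Rightarrow> complex)
    \<Rightarrow> real \<Rightarrow> real \<Rightarrow> complex list" where
  "coeffE1 f g h a b = [- \<i> * h a, - g (b + pi) a, f (b + pi) a, \<i> * h (b + pi)]"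

definition coeffE2 :: "(real \<Rightarrow> real \<Rightarrow> complex) \<Rightarrow> (real \<Rightarrow> real \<Rightarrow> complex) \<Rightarrow> (real \<Rightarrow> complex)
    \<Rightarrow> real \<Rightarrow> real \<Rightarrow> complex list" where
  "coeffE2 f g h a b = [- \<i> * h b, f (a + pi) b, - g (a + pi) b, \<i> * h (a + pi)]"

definition proportional :: "complex list \<Rightarrow> complex list \<Rightarrow> bool" where
  "proportional u v \<longleftrightarrow> (\<exists>x\<in>set u. x \<noteq> 0) \<and> (\<exists>l. l \<noteq> 0 \<and> v = map (\<lambda>x. l * x) u)"

definition centering_symmetric ::
  "(real \<Rightarrow> real \<Rightarrow> complex) \<Rightarrow> (real \<Rightarrow> real \<Rightarrow> complex) \<Rightarrow> (real \<Rightarrow> complex) \<Rightarrow> bool" where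
  "centering_symmetric f g h \<longleftrightarrow> (\<forall>a b.
      proportional (coeffE0 f g h a b) (coeffE12 f g h a b) \<and>
      proportional (coeffE0 f g h a b) (coeffE1 f g h a b) \<and>
      proportional (coeffE0 f g h a b) (coeffE2 f g h a b))"

end

theory Submission
  imports Defs
begin

lemma prop4: "proportional [a1,a2,a3,a4] [b1,b2,b3,b4] \<longleftrightarrow>
  (a1\<noteq>0 \<or> a2\<noteq>0 \<or> a3\<noteq>0 \<or> a4\<noteq>0) \<and> (\<exists>l. l\<noteq>0 \<and> b1 = l*a1 \<and> b2 = l*a2 \<and> b3 = l*a3 \<and> b4 = l*a4)"
  by (auto simp: proportional_def)

lemma ieq1[simp]: "- (\<i> * x) = \<i> * y \<longleftrightarrow> x = - y"
  by (auto simp: complex_eq_iff)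
lemma ieq2[simp]: "\<i> * x = - (\<i> * y) \<longleftrightarrow> x = - y"
  by (auto simp: complex_eq_iff)

lemma negeq: "- (x::complex) = y \<Longrightarrow> x = - y" by (auto simp: complex_eq_iff)

lemma fwd:
  fixes f g :: "real \<Rightarrow> real \<Rightarrow> complex" and h :: "real \<Rightarrow> complex"
  assumes cs: "centering_symmetric f g h"
  shows "\<exists>c. c \<noteq> 0 \<and> (\<forall>a b. h a * h (a + pi) = c \<and> f a b * f (a + pi) b = - c
                                 \<and> g a b = f a b * h a * h b / c)"
proof -
  have E0: "\<And>a b. g a b \<noteq> 0 \<or> h a \<noteq> 0 \<or> h b \<noteq> 0 \<or> f a b \<noteq> 0"
    using cs unfolding centering_symmetric_def coeffE0_def coeffE12_def prop4 by auto
  have E12: "\<And>a b. \<exists>n. n \<noteq> 0 \<and> f (a+pi) (b+pi) = - n * g a b \<and> h (b+pi) = - n * h a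
      \<and> h (a+pi) = - n * h b \<and> g (a+pi) (b+pi) = - n * f a b"
  proof -
    fix a b
    obtain n where "n \<noteq> 0" "f (a+pi) (b+pi) = n * (- g a b)" "- \<i> * h (b+pi) = n * (\<i> * h a)"
      "\<i> * h (a+pi) = n * (- \<i> * h b)" "- g (a+pi) (b+pi) = n * f a b"
      using cs unfolding centering_symmetric_def coeffE0_def coeffE12_def prop4 by blast
    note eqs = this
    show "?thesis a b" apply (intro exI[of _ n] conjI)
      using eqs by (auto dest!: negeq simp: algebra_simps)
  qed
  have E1: "\<And>a b. \<exists>m. m \<noteq> 0 \<and> \<i> * h a = m * g a b \<and> g (b+pi) a = - m * \<i> * h a
      \<and> f (b+pi) a = - m * \<i> * h b \<and> \<i> * h (b+pi) = m * f a b"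
  proof -
    fix a b
    obtain m where "m \<noteq> 0" "- \<i> * h a = m * (- g a b)" "- g (b+pi) a = m * (\<i> * h a)"
      "f (b+pi) a = m * (- \<i> * h b)" "\<i> * h (b+pi) = m * f a b"
      using cs unfolding centering_symmetric_def coeffE0_def coeffE1_def prop4 by blast
    note eqs = this
    show "?thesis a b" apply (intro exI[of _ m] conjI)
      using eqs by (auto dest!: negeq simp: algebra_simps)
  qed
  have E2: "\<And>a b. \<exists>l. l \<noteq> 0 \<and> \<i> * h b = l * g a b \<and> f (a+pi) b = l * \<i> * h a
      \<and> g (a+pi) b = l * \<i> * h b \<and> \<i> * h (a+pi) = l * f a b"
  proof -
    fix a b
    obtain l where "l \<noteq> 0" "- \<i> * h b = l * (- g a b)" "f (a+pi) b = l * (\<i> * h a)"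
      "- g (a+pi) b = l * (- \<i> * h b)" "\<i> * h (a+pi) = l * f a b"
      using cs unfolding centering_symmetric_def coeffE0_def coeffE2_def prop4 by blast
    note eqs = this
    show "?thesis a b" apply (intro exI[of _ l] conjI)
      using eqs by (auto dest!: negeq simp: algebra_simps)
  qed
  have hnz: "h a \<noteq> 0" for a
  proof
    assume h0: "h a = 0"
    have g0: "g a b = 0" for b using E1[where a=a and b=b] h0 by auto
    have hb: "h b = 0" for b using E2[where a=a and b=b] g0[of b] by auto
    have f0: "f x b = 0" for x b using E2[where a="x - pi" and b=b] hb by auto
    have gz: "g x b = 0" for x b using E1[where a=x and b=b] hb by auto
    show False using E0[where a=0 and b=0] hb f0 gz by auto
  qed
  have hc: "h a * h (a+pi) = h b * h (b+pi)" for a b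
  proof -
    obtain n where "h (b+pi) = - n * h a" "h (a+pi) = - n * h b" using E12[where a=a and b=b] by blast
    then show ?thesis by simp
  qed
  define c where "c = h 0 * h pi"
  have hc': "h a * h (a+pi) = c" for a using hc[of a 0] unfolding c_def by simp
  have cnz: "c \<noteq> 0" using hnz[of 0] hnz[of pi] unfolding c_def by simp
  have ff: "f a b * f (a + pi) b = - c" for a b
  proof -
    obtain l where l: "l \<noteq> 0" "f (a+pi) b = l * \<i> * h a" "\<i> * h (a+pi) = l * f a b"
      using E2[where a=a and b=b] by blast
    have "l * (f a b * f (a + pi) b) = (l * f a b) * f (a+pi) b" by simp
    also have "\<dots> = \<i> * h (a+pi) * (l * \<i> * h a)" using l by simp
    also have "\<dots> = l * (- (h a * h (a+pi)))" by (simp add: algebra_simps)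
    also have "\<dots> = l * (- c)" using hc'[of a] by simp
    finally show ?thesis using l(1) by (metis mult_left_cancel)
  qed
  have gg: "g a b = f a b * h a * h b / c" for a b
  proof -
    obtain m where m: "m \<noteq> 0" "\<i> * h a = m * g a b" "\<i> * h (b+pi) = m * f a b"
      using E1[where a=a and b=b] by blast
    have "m * (g a b * c) = \<i> * h a * (h b * h (b+pi))" using m hc'[of b] by simp
    also have "\<dots> = h a * h b * (\<i> * h (b+pi))" by (simp add: algebra_simps)
    also have "\<dots> = m * (f a b * h a * h b)" using m by (simp add: algebra_simps)
    finally have "g a b * c = f a b * h a * h b" using m(1) by simp
    then show ?thesis using cnz by (simp add: field_simps)
  qed
  show ?thesis using cnz hc' ff gg by blast
qed

lemma fpp:
  fixes f g :: "real \<Rightarrow> real \<Rightarrow> complex" and h :: "real \<Rightarrow> complex"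
  assumes f_skew: "\<And>a b. f a b = - f b a"
    and c: "c \<noteq> 0" "\<And>a b. f a b * f (a + pi) b = - c"
  shows "f a b = f (a + pi) (b + pi)" "f a b * f a (b+pi) = - c"
proof -
  show 1: "f a b * f a (b+pi) = - c" for a b
    using c(2)[of b a] f_skew[of a b] f_skew[of a "b+pi"] by simp
  have "f (a+pi) b * f (a + pi) (b+pi) = - c" by (rule 1)
  moreover have "f a b * f (a+pi) b = - c" by (rule c(2))
  moreover have "f (a+pi) b \<noteq> 0" using c(2)[of a b] c(1) by auto
  ultimately show "f a b = f (a + pi) (b + pi)"
    by (metis mult.commute mult_left_cancel)
qed

lemma bwd:
  fixes f g :: "real \<Rightarrow> real \<Rightarrow> complex" and h :: "real \<Rightarrow> complex"
  assumes f_skew: "\<And>a b. f a b = - f b a"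
    and cnz: "c \<noteq> 0"
    and H: "\<forall>a b. h a * h (a + pi) = c \<and> f a b * f (a + pi) b = - c
                                 \<and> g a b = f a b * h a * h b / c"
  shows "centering_symmetric f g h"
proof -
  have hc: "h a * h (a+pi) = c" for a using H by blast
  have ff: "f a b * f (a + pi) b = - c" for a b using H by blast
  have gg: "g a b = f a b * h a * h b / c" for a b using H by blast
  have hnz: "h a \<noteq> 0" for a using hc[of a] cnz by auto
  have fnz: "f a b \<noteq> 0" for a b using ff[of a b] cnz by auto
  have ff2: "f a b * f a (b+pi) = - c" and fpp: "f (a+pi) (b+pi) = f a b" for a b
    using fpp[where f=f, OF f_skew cnz ff] by auto
  have hp: "h (x+pi) = c / h x" for x using hc[of x] hnz[of x] by (simp add: field_simps)
  have fp1: "f (x+pi) y = - c / f x y" for x y using ff[of x y] fnz[of x y] by (simp add: field_simps)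
  have fp2: "f x (y+pi) = - c / f x y" for x y using ff2[of x y] fnz[of x y] by (simp add: field_simps)
  show ?thesis unfolding centering_symmetric_def
  proof (intro allI conjI)
    fix a b
    have fba: "f b a = - f a b" by (rule f_skew)
    note fz = fnz[of a b] hnz[of a] hnz[of b]
    show "proportional (coeffE0 f g h a b) (coeffE12 f g h a b)"
      unfolding coeffE0_def coeffE12_def prop4
      apply (intro conjI exI[of _ "- c / (h a * h b)"])
      using fz cnz by (simp_all add: gg hp fp1 fp2 fba, (simp_all add: field_simps)?)
    show "proportional (coeffE0 f g h a b) (coeffE1 f g h a b)"
      unfolding coeffE0_def coeffE1_def prop4
      apply (intro conjI exI[of _ "\<i> * c / (h b * f a b)"])
      using fz cnz by (simp_all add: gg hp fp1 fp2 fba, (simp_all add: field_simps)?)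
    show "proportional (coeffE0 f g h a b) (coeffE2 f g h a b)"
      unfolding coeffE0_def coeffE2_def prop4
      apply (intro conjI exI[of _ "\<i> * c / (h a * f a b)"])
      using fz cnz by (simp_all add: gg hp fp1 fp2 fba, (simp_all add: field_simps)?)
  qed
qed

theorem lemma1:
  fixes f g :: "real \<Rightarrow> real \<Rightarrow> complex" and h :: "real \<Rightarrow> complex"
  assumes f_per: "\<And>a b. f (a + 2*pi) b = f a b" "\<And>a b. f a (b + 2*pi) = f a b"
    and g_per: "\<And>a b. g (a + 2*pi) b = g a b" "\<And>a b. g a (b + 2*pi) = g a b"
    and h_per: "\<And>a. h (a + 2*pi) = h a"
    and f_skew: "\<And>a b. f a b = - f b a"
    and g_skew: "\<And>a b. g a b = - g b a"
  shows "(centering_symmetric f g h \<longleftrightarrow>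
           (\<exists>c. c \<noteq> 0 \<and> (\<forall>a b. h a * h (a + pi) = c \<and> f a b * f (a + pi) b = - c
                                 \<and> g a b = f a b * h a * h b / c)))
       \<and> ((\<exists>c. c \<noteq> 0 \<and> (\<forall>a b. h a * h (a + pi) = c \<and> f a b * f (a + pi) b = - c
                                 \<and> g a b = f a b * h a * h b / c))
            \<longrightarrow> (\<forall>a b. f a b = f (a + pi) (b + pi)))"
proof (intro conjI iffI impI allI)
  assume "centering_symmetric f g h"
  then show "\<exists>c. c \<noteq> 0 \<and> (\<forall>a b. h a * h (a + pi) = c \<and> f a b * f (a + pi) b = - c
                                 \<and> g a b = f a b * h a * h b / c)" by (rule fwd)
next
  assume "\<exists>c. c \<noteq> 0 \<and> (\<forall>a b. h a * h (a + pi) = c \<and> f a b * f (a + pi) b = - c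
                                 \<and> g a b = f a b * h a * h b / c)"
  then obtain c where c1: "c \<noteq> 0" and c2: "\<forall>a b. h a * h (a + pi) = c \<and> f a b * f (a + pi) b = - c
                                 \<and> g a b = f a b * h a * h b / c" by (elim exE conjE)
  show "centering_symmetric f g h" by (rule bwd[where f=f and g=g and h=h and c=c, OF f_skew c1 c2])
next
  fix a b
  assume "\<exists>c. c \<noteq> 0 \<and> (\<forall>a b. h a * h (a + pi) = c \<and> f a b * f (a + pi) b = - c
                                 \<and> g a b = f a b * h a * h b / c)"
  then obtain c where c1: "c \<noteq> 0" and c2: "\<forall>a b. h a * h (a + pi) = c \<and> f a b * f (a + pi) b = - c
                                 \<and> g a b = f a b * h a * h b / c" by (elim exE conjE)
  have c3: "\<And>a b. f a b * f (a + pi) b = - c" using c2 by simp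
  show "f a b = f (a + pi) (b + pi)" by (rule fpp(1)[where f=f and c=c, OF f_skew c1 c3])
qed

end
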